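(* Let $4\le q<\omega$ and let $\mathbf{A}$ be a Monk algebra obtained from $\mathbf{E}^{23}_q$ by splitting. Let $\mathbf{E}$ be any subalgebra of $\mathbf{E}^{23}_q$. Then $\mathbf{A}$ is a special extension of $\mathbf{E}$, i.e., for all diversity atoms $a,b,c$ of $\mathbf{E}$: (1) if not $a=b=c$ and $a;b\ge c$, then $x;y\ge c$ whenever $x,y$ are atoms of $\mathbf{A}$ with $x\le a$ and $y\le b$; and (2) if $a;a\ge a$, then $x;y\cdot a\ne 0$ whenever $x,y$ are atoms of $\mathbf{A}$ with $x,y\le a$.
   Context: Relation algebras are in the sense of Tarski; $1'$ identity, $0'$ its complement, $;$ relative product, $x^{\smile}$ converse, $\overline{x}$ Boolean complement; integral: $1'$ is an atom; symmetric: $x^{\smile}=x$ for all $x$; a diversity atom is an atom below $0'$. For $4\le q<\omega$, $\mathbf{E}^{23}_q$ is the finite symmetric integral relation algebra with $q$ atoms $e_0=1',e_1,\dots,e_{q-1}$ such that $a;b=0'$ for distinct diversity atoms $a,b$ and $a;a=\overline{a}$ for every diversity atom $a$. For atomic relation algebras $\mathbf{A},\mathbf{B}$, $\mathbf{A}$ is obtained from $\mathbf{B}$ by splitting if $\mathbf{B}\subseteq\mathbf{A}$, every atom $x$ of $\mathbf{A}$ is below an atom $c(x)$ of $\mathbf{B}$, and for all atoms $x,y\le0'$ of $\mathbf{A}$: $x;y=c(x);c(y)\cdot0'$ if $x\ne y^{\smile}$, and $x;y=c(x);c(y)$ if $x=y^{\smile}$. A Monk algebra is an atomic symmetric integral relation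 algebra obtained by splitting from some $\mathbf{E}^{23}_q$, $4\le q<\omega$. *)

theory Defs
  imports Main
begin

(* An (abstract) algebra of relation-algebra signature over an ambient type 'a:
   carrier, Boolean join, Boolean complement, relative product, converse, identity 1'. *)
record 'a ra =
  car :: "'a set"
  pl  :: "'a \<Rightarrow> 'a \<Rightarrow> 'a"
  neg :: "'a \<Rightarrow> 'a"
  cmp :: "'a \<Rightarrow> 'a \<Rightarrow> 'a"
  cnv :: "'a \<Rightarrow> 'a"
  idt :: "'a"

definition mt :: "('a, 'b) ra_scheme \<Rightarrow> 'a \<Rightarrow> 'a \<Rightarrow> 'a" where
  "mt R x y = neg R (pl R (neg R x) (neg R y))"

definition leq :: "('a, 'b) ra_scheme \<Rightarrow> 'a \<Rightarrow> 'a \<Rightarrow> bool" where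
  "leq R x y \<longleftrightarrow> pl R x y = y"

definition zero :: "('a, 'b) ra_scheme \<Rightarrow> 'a" where
  "zero R = mt R (idt R) (neg R (idt R))"

definition dvs :: "('a, 'b) ra_scheme \<Rightarrow> 'a" where
  "dvs R = neg R (idt R)"

(* Tarski's axioms (Huntington's axioms for the Boolean part, plus R4--R10) *)
definition is_RA :: "('a, 'b) ra_scheme \<Rightarrow> bool" where
  "is_RA R \<longleftrightarrow>
     idt R \<in> car R \<and>
     (\<forall>x\<in>car R. \<forall>y\<in>car R. pl R x y \<in> car R \<and> cmp R x y \<in> car R) \<and>
     (\<forall>x\<in>car R. neg R x \<in> car R \<and> cnv R x \<in> car R) \<and>
     (\<forall>x\<in>car R. \<forall>y\<in>car R. pl R x y = pl R y x) \<and>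
     (\<forall>x\<in>car R. \<forall>y\<in>car R. \<forall>z\<in>car R. pl R (pl R x y) z = pl R x (pl R y z)) \<and>
     (\<forall>x\<in>car R. \<forall>y\<in>car R.
        pl R (neg R (pl R (neg R x) y)) (neg R (pl R (neg R x) (neg R y))) = x) \<and>
     (\<forall>x\<in>car R. \<forall>y\<in>car R. \<forall>z\<in>car R. cmp R (cmp R x y) z = cmp R x (cmp R y z)) \<and>
     (\<forall>x\<in>car R. \<forall>y\<in>car R. \<forall>z\<in>car R. cmp R (pl R x y) z = pl R (cmp R x z) (cmp R y z)) \<and>
     (\<forall>x\<in>car R. cmp R x (idt R) = x) \<and>
     (\<forall>x\<in>car R. cnv R (cnv R x) = x) \<and>
     (\<forall>x\<in>car R. \<forall>y\<in>car R. cnv R (pl R x y) = pl R (cnv R x) (cnv R y)) \<and>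
     (\<forall>x\<in>car R. \<forall>y\<in>car R. cnv R (cmp R x y) = cmp R (cnv R y) (cnv R x)) \<and>
     (\<forall>x\<in>car R. \<forall>y\<in>car R.
        pl R (cmp R (cnv R x) (neg R (cmp R x y))) (neg R y) = neg R y)"

definition atom :: "('a, 'b) ra_scheme \<Rightarrow> 'a \<Rightarrow> bool" where
  "atom R x \<longleftrightarrow> x \<in> car R \<and> x \<noteq> zero R \<and>
     (\<forall>y\<in>car R. leq R y x \<longrightarrow> y = zero R \<or> y = x)"

definition atomic :: "('a, 'b) ra_scheme \<Rightarrow> bool" where
  "atomic R \<longleftrightarrow> (\<forall>x\<in>car R. x \<noteq> zero R \<longrightarrow> (\<exists>a. atom R a \<and> leq R a x))"

definition integral :: "('a, 'b) ra_scheme \<Rightarrow> bool" where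
  "integral R \<longleftrightarrow> atom R (idt R)"

definition symmetric :: "('a, 'b) ra_scheme \<Rightarrow> bool" where
  "symmetric R \<longleftrightarrow> (\<forall>x\<in>car R. cnv R x = x)"

definition subalg :: "('a, 'b) ra_scheme \<Rightarrow> ('a, 'c) ra_scheme \<Rightarrow> bool" where
  "subalg E A \<longleftrightarrow> is_RA E \<and> is_RA A \<and> car E \<subseteq> car A \<and> idt E = idt A \<and>
     (\<forall>x\<in>car E. \<forall>y\<in>car E. pl E x y = pl A x y \<and> cmp E x y = cmp A x y) \<and>
     (\<forall>x\<in>car E. neg E x = neg A x \<and> cnv E x = cnv A x)"

definition splitting :: "('a, 'b) ra_scheme \<Rightarrow> ('a, 'c) ra_scheme \<Rightarrow> bool" where
  "splitting A B \<longleftrightarrow> atomic A \<and> atomic B \<and> subalg B A \<and>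
     (\<forall>x. atom A x \<longrightarrow> (\<exists>c. atom B c \<and> leq A x c)) \<and>
     (\<forall>x y cx cy. atom A x \<and> atom A y \<and> leq A x (dvs A) \<and> leq A y (dvs A) \<and>
        atom B cx \<and> atom B cy \<and> leq A x cx \<and> leq A y cy \<longrightarrow>
        cmp A x y = (if x \<noteq> cnv A y then mt A (cmp A cx cy) (dvs A) else cmp A cx cy))"

definition is_E23 :: "nat \<Rightarrow> ('a, 'b) ra_scheme \<Rightarrow> bool" where
  "is_E23 q B \<longleftrightarrow> is_RA B \<and> finite (car B) \<and> symmetric B \<and> integral B \<and>
     card {a. atom B a} = q \<and>
     (\<forall>a b. atom B a \<and> atom B b \<and> leq B a (dvs B) \<and> leq B b (dvs B) \<longrightarrow>
        (a \<noteq> b \<longrightarrow> cmp B a b = dvs B) \<and> cmp B a a = neg B a)"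

end

theory Submission imports Defs begin

locale rba = fixes R :: "('a,'b) ra_scheme"
  assumes RA: "is_RA R"
begin
lemma parts1: "idt R \<in> car R" using RA unfolding is_RA_def by (elim conjE) assumption
lemma parts2: "\<forall>x\<in>car R. \<forall>y\<in>car R. pl R x y \<in> car R \<and> cmp R x y \<in> car R" using RA unfolding is_RA_def by (elim conjE) assumption
lemma parts3: "\<forall>x\<in>car R. neg R x \<in> car R \<and> cnv R x \<in> car R" using RA unfolding is_RA_def by (elim conjE) assumption
lemma parts4: "\<forall>x\<in>car R. \<forall>y\<in>car R. pl R x y = pl R y x" using RA unfolding is_RA_def by (elim conjE) assumption
lemma parts5: "\<forall>x\<in>car R. \<forall>y\<in>car R. \<forall>z\<in>car R. pl R (pl R x y) z = pl R x (pl R y z)" using RA unfolding is_RA_def by (elim conjE) assumption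
lemma parts6: "\<forall>x\<in>car R. \<forall>y\<in>car R. pl R (neg R (pl R (neg R x) y)) (neg R (pl R (neg R x) (neg R y))) = x" using RA unfolding is_RA_def by (elim conjE) assumption
lemma cp[simp]: "x\<in>car R \<Longrightarrow> y\<in>car R \<Longrightarrow> pl R x y \<in> car R" using parts2 by simp
lemma cn[simp]: "x\<in>car R \<Longrightarrow> neg R x \<in> car R" using parts3 by simp
lemma cc[simp]: "x\<in>car R \<Longrightarrow> y\<in>car R \<Longrightarrow> cmp R x y \<in> car R" using parts2 by simp
lemma ci[simp]: "idt R \<in> car R" using parts1 by simp
lemma com: "x\<in>car R \<Longrightarrow> y\<in>car R \<Longrightarrow> pl R x y = pl R y x" using parts4 by blast
lemma ass: "x\<in>car R \<Longrightarrow> y\<in>car R \<Longrightarrow> z\<in>car R \<Longrightarrow> pl R (pl R x y) z = pl R x (pl R y z)"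
  using parts5 by blast
lemma H: "x\<in>car R \<Longrightarrow> y\<in>car R \<Longrightarrow> pl R (neg R (pl R (neg R x) y)) (neg R (pl R (neg R x) (neg R y))) = x"
  using parts6 by blast
lemma L1: "x\<in>car R \<Longrightarrow> pl R x (neg R x) = pl R (neg R x) (neg R (neg R x))"
  by (smt (verit, ccfv_threshold) H ass cn com cp)
lemma L2: "x\<in>car R \<Longrightarrow> neg R (neg R x) = x"
  by (metis H L1 cn com cp)
lemma L3: "x\<in>car R \<Longrightarrow> y\<in>car R \<Longrightarrow> pl R x (neg R x) = pl R y (neg R y)"
  by (smt (verit) H L2 ass cn com cp)
lemma L4: "x\<in>car R \<Longrightarrow> pl R x x = x"
  by (smt (verit) H L2 L3 ass cn cp)
lemma L5: "x\<in>car R \<Longrightarrow> y\<in>car R \<Longrightarrow> pl R x (pl R y (neg R y)) = pl R y (neg R y)"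
  by (metis L3 L4 ass cn com)
lemma L6: "x\<in>car R \<Longrightarrow> y\<in>car R \<Longrightarrow> pl R x (neg R (pl R y (neg R y))) = x"
  by (smt (verit) H L2 L3 L4 L5 ass cn com cp)
lemma cm[simp]: "x\<in>car R \<Longrightarrow> y\<in>car R \<Longrightarrow> mt R x y \<in> car R" by (simp add: mt_def)
lemma mcom: "x\<in>car R \<Longrightarrow> y\<in>car R \<Longrightarrow> mt R x y = mt R y x" by (simp add: mt_def com)
lemma mass: "x\<in>car R \<Longrightarrow> y\<in>car R \<Longrightarrow> z\<in>car R \<Longrightarrow> mt R (mt R x y) z = mt R x (mt R y z)" by (simp add: mt_def L2 ass)
lemma midem: "x\<in>car R \<Longrightarrow> mt R x x = x" by (simp add: mt_def L2 L4)
lemma absorb: "x\<in>car R \<Longrightarrow> y\<in>car R \<Longrightarrow> pl R x (mt R x y) = x" unfolding mt_def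
  by (smt (verit) H L4 ass cn cp)
lemma LE1: "x\<in>car R \<Longrightarrow> y\<in>car R \<Longrightarrow> leq R x y \<Longrightarrow> mt R x y = x" unfolding mt_def leq_def
  by (smt (verit) H L2 L5 L6 ass cn cp com)
lemma LE2: "x\<in>car R \<Longrightarrow> y\<in>car R \<Longrightarrow> mt R x y = x \<Longrightarrow> leq R x y"
  unfolding leq_def by (metis absorb com mcom cm)
lemma glb: "x\<in>car R \<Longrightarrow> y\<in>car R \<Longrightarrow> z\<in>car R \<Longrightarrow> leq R z x \<Longrightarrow> leq R z y \<Longrightarrow> leq R z (mt R x y)"
  by (metis LE1 LE2 mass cm)
lemma mle: "x\<in>car R \<Longrightarrow> y\<in>car R \<Longrightarrow> leq R (mt R x y) x"
  unfolding leq_def by (metis absorb com cm)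
lemma trans: "x\<in>car R \<Longrightarrow> y\<in>car R \<Longrightarrow> z\<in>car R \<Longrightarrow> leq R x y \<Longrightarrow> leq R y z \<Longrightarrow> leq R x z"
  unfolding leq_def by (metis ass)
lemma antisym: "x\<in>car R \<Longrightarrow> y\<in>car R \<Longrightarrow> leq R x y \<Longrightarrow> leq R y x \<Longrightarrow> x = y"
  unfolding leq_def by (metis com)
lemma zero_eq: "y\<in>car R \<Longrightarrow> zero R = neg R (pl R y (neg R y))"
  unfolding zero_def mt_def by (metis L2 L3 ci cn com)
lemma czero[simp]: "zero R \<in> car R" unfolding zero_def by simp
lemma mneg: "x\<in>car R \<Longrightarrow> mt R x (neg R x) = zero R"
  by (metis L2 zero_eq mt_def cn com)
lemma lezero: "x\<in>car R \<Longrightarrow> leq R x (zero R) \<Longrightarrow> x = zero R"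
  unfolding leq_def by (metis L6 zero_eq)
lemma disj: "c\<in>car R \<Longrightarrow> d\<in>car R \<Longrightarrow> mt R d c = zero R \<Longrightarrow> leq R c (neg R d)"
proof -
  assume a: "c\<in>car R" "d\<in>car R" "mt R d c = zero R"
  have "mt R c d = neg R (pl R c (neg R c))" using a mcom zero_eq by metis
  hence "mt R c (neg R d) = c" using H[of c "neg R d"] a unfolding mt_def by (metis L2 L6 cn cp com)
  thus ?thesis using LE2 a by simp
qed
end

lemma sub_car: "subalg S R \<Longrightarrow> x \<in> car S \<Longrightarrow> x \<in> car R" unfolding subalg_def by blast
lemma sub_mt: "subalg S R \<Longrightarrow> x \<in> car S \<Longrightarrow> y \<in> car S \<Longrightarrow> mt S x y = mt R x y"
  unfolding subalg_def mt_def using rba.cn[of S] rba.cp[of S] rba_def by metis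
lemma sub_leq: "subalg S R \<Longrightarrow> x \<in> car S \<Longrightarrow> y \<in> car S \<Longrightarrow> leq S x y = leq R x y"
  unfolding subalg_def leq_def by metis
lemma sub_zero: "subalg S R \<Longrightarrow> zero S = zero R"
  unfolding zero_def using sub_mt[of S R] rba.ci[of S] rba.cn[of S] rba_def subalg_def by metis
lemma sub_dvs: "subalg S R \<Longrightarrow> dvs S = dvs R"
  unfolding dvs_def using rba.ci[of S] rba_def subalg_def by metis
lemma sub_cmp: "subalg S R \<Longrightarrow> x \<in> car S \<Longrightarrow> y \<in> car S \<Longrightarrow> cmp S x y = cmp R x y"
  unfolding subalg_def by metis
lemma sub_neg: "subalg S R \<Longrightarrow> x \<in> car S \<Longrightarrow> neg S x = neg R x"
  unfolding subalg_def by metis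
lemma sub_trans: "subalg E B \<Longrightarrow> subalg B A \<Longrightarrow> subalg E A"
  unfolding subalg_def by (metis subset_trans subsetD)


lemma atom_car: "atom R x \<Longrightarrow> x \<in> car R" unfolding atom_def by simp
lemma atom_nz: "atom R x \<Longrightarrow> x \<noteq> zero R" unfolding atom_def by simp
lemma atom_le: "atom R x \<Longrightarrow> y \<in> car R \<Longrightarrow> leq R y x \<Longrightarrow> y = zero R \<or> y = x" unfolding atom_def by simp

theorem lemma1:
  fixes q :: nat and A B E :: "'a ra"
  assumes "4 \<le> q"
    and "is_E23 q B"
    and "is_RA A" and "atomic A" and "symmetric A" and "integral A"
    and "splitting A B"
    and "subalg E B"
  shows "\<forall>a b c. atom E a \<and> atom E b \<and> atom E c \<and>
           leq A a (dvs A) \<and> leq A b (dvs A) \<and> leq A c (dvs A) \<longrightarrow>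
           ((\<not> (a = b \<and> b = c) \<and> leq A c (cmp A a b) \<longrightarrow>
               (\<forall>x y. atom A x \<and> atom A y \<and> leq A x a \<and> leq A y b \<longrightarrow>
                  leq A c (cmp A x y))) \<and>
            (leq A a (cmp A a a) \<longrightarrow>
               (\<forall>x y. atom A x \<and> atom A y \<and> leq A x a \<and> leq A y a \<longrightarrow>
                  mt A (cmp A x y) a \<noteq> zero A)))"
proof -
  have acA: "\<And>x. atom A x \<Longrightarrow> x \<in> car A" by (rule atom_car)
  have acB: "\<And>x. atom B x \<Longrightarrow> x \<in> car B" by (rule atom_car)
  have acE: "\<And>x. atom E x \<Longrightarrow> x \<in> car E" by (rule atom_car)
  have sEB: "subalg E B" by fact
  have sBA: "subalg B A" using assms(7) unfolding splitting_def by simp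
  have sEA: "subalg E A" using sEB sBA by (rule sub_trans)
  interpret Ai: rba A using assms(3) by (simp add: rba_def)
  interpret Bi: rba B using sBA by (simp add: rba_def subalg_def)
  interpret Ei: rba E using sEB by (simp add: rba_def subalg_def)
  have zBA: "zero B = zero A" using sBA by (rule sub_zero)
  have zEA: "zero E = zero A" using sEA by (rule sub_zero)
  have dBA: "dvs B = dvs A" using sBA by (rule sub_dvs)
  have dA: "dvs A \<in> car A" unfolding dvs_def by simp
  have EB: "\<And>u. u \<in> car E \<Longrightarrow> u \<in> car B" using sEB by (rule sub_car)
  have BA: "\<And>u. u \<in> car B \<Longrightarrow> u \<in> car A" using sBA by (rule sub_car)
  have cover: "\<And>x. atom A x \<Longrightarrow> \<exists>d. atom B d \<and> leq A x d"
    using assms(7) unfolding splitting_def by blast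
  have splitf: "\<And>x y cx cy. atom A x \<Longrightarrow> atom A y \<Longrightarrow> leq A x (dvs A) \<Longrightarrow> leq A y (dvs A) \<Longrightarrow>
        atom B cx \<Longrightarrow> atom B cy \<Longrightarrow> leq A x cx \<Longrightarrow> leq A y cy \<Longrightarrow>
        cmp A x y = (if x \<noteq> cnv A y then mt A (cmp A cx cy) (dvs A) else cmp A cx cy)"
    using assms(7) unfolding splitting_def by blast
  have e23: "\<And>d e. atom B d \<Longrightarrow> atom B e \<Longrightarrow> leq A d (dvs A) \<Longrightarrow> leq A e (dvs A) \<Longrightarrow>
      (d \<noteq> e \<longrightarrow> cmp A d e = dvs A) \<and> cmp A d d = neg A d"
  proof -
    fix d e assume h: "atom B d" "atom B e" "leq A d (dvs A)" "leq A e (dvs A)"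
    have dB: "d \<in> car B" "e \<in> car B" using h acB by auto
    have dvB: "dvs B \<in> car B" unfolding dvs_def by simp
    have "leq B d (dvs B)" "leq B e (dvs B)" using h dB dvB sub_leq[OF sBA] dBA by auto
    hence "(d \<noteq> e \<longrightarrow> cmp B d e = dvs B) \<and> cmp B d d = neg B d"
      using assms(2) h unfolding is_E23_def by blast
    thus "(d \<noteq> e \<longrightarrow> cmp A d e = dvs A) \<and> cmp A d d = neg A d"
      using sub_cmp[OF sBA] sub_neg[OF sBA] dB dBA by auto
  qed
  have K1: "\<And>x u. atom A x \<Longrightarrow> u \<in> car B \<Longrightarrow> leq A x u \<Longrightarrow> \<exists>d. atom B d \<and> leq A x d \<and> leq A d u"
  proof -
    fix x u assume h: "atom A x" "u \<in> car B" "leq A x u"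
    obtain d where d: "atom B d" "leq A x d" using cover h by blast
    have dB: "d \<in> car B" using d acA acB acE by blast
    have xA: "x \<in> car A" using h acA acB acE by blast
    have "mt B d u = zero B \<or> mt B d u = d"
      using atom_le[OF d(1)] Bi.mle[OF dB h(2)] dB h(2) by simp
    moreover have "mt B d u = mt A d u" using sub_mt[OF sBA] dB h(2) by simp
    moreover have "leq A x (mt A d u)" using Ai.glb BA dB h xA d by simp
    ultimately have "mt A d u = d"
      using Ai.lezero xA zBA atom_nz[OF h(1)] by metis
    hence "leq A d u" using Ai.LE2 BA dB h(2) by simp
    thus "\<exists>d. atom B d \<and> leq A x d \<and> leq A d u" using d by blast
  qed
  have K2: "\<And>d a c. atom B d \<Longrightarrow> atom E a \<Longrightarrow> atom E c \<Longrightarrow> leq A d a \<Longrightarrow> leq A d c \<Longrightarrow> a = c"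
  proof -
    fix d a c assume h: "atom B d" "atom E a" "atom E c" "leq A d a" "leq A d c"
    have aE: "a \<in> car E" "c \<in> car E" using h acA acB acE by auto
    have aA: "a \<in> car A" "c \<in> car A" using aE EB BA by auto
    have dA': "d \<in> car A" using h acA acB acE BA by blast
    have nz: "mt A a c \<noteq> zero A"
    proof
      assume "mt A a c = zero A"
      hence "leq A d (zero A)" using Ai.glb aA dA' h by metis
      hence "d = zero B" using Ai.lezero dA' zBA by simp
      thus False using atom_nz[OF h(1)] by simp
    qed
    have m1: "mt E a c = mt A a c" "mt E c a = mt A c a" using sub_mt[OF sEA] aE by auto
    have "mt E a c = zero E \<or> mt E a c = a" using atom_le[OF h(2)] Ei.mle aE by simp
    hence "mt A a c = a" using m1 zEA nz by simp
    moreover have "mt E c a = zero E \<or> mt E c a = c" using atom_le[OF h(3)] Ei.mle aE by simp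
    hence "mt A c a = c" using m1 zEA nz Ai.mcom aA by metis
    ultimately show "a = c" using Ai.mcom aA by metis
  qed
  have K3: "\<And>d c. atom B d \<Longrightarrow> atom E c \<Longrightarrow> \<not> leq A d c \<Longrightarrow> leq A c (neg A d)"
  proof -
    fix d c assume h: "atom B d" "atom E c" "\<not> leq A d c"
    have cB: "c \<in> car B" using h acA acB acE EB by blast
    have dB: "d \<in> car B" using h acA acB acE by blast
    have "mt B d c = zero B \<or> mt B d c = d" using atom_le[OF h(1)] Bi.mle cB dB by simp
    moreover have "mt B d c = mt A d c" using sub_mt[OF sBA] dB cB by simp
    moreover have "mt A d c \<noteq> d" using Ai.LE2 BA cB dB h(3) by blast
    ultimately have "mt A d c = zero A" using zBA by simp
    thus "leq A c (neg A d)" using Ai.disj BA cB dB by blast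
  qed
  show ?thesis
  proof (intro allI impI conjI)
    fix a b c
    assume h: "atom E a \<and> atom E b \<and> atom E c \<and> leq A a (dvs A) \<and> leq A b (dvs A) \<and> leq A c (dvs A)"
    have aE: "a \<in> car E" "b \<in> car E" "c \<in> car E" using h acA acB acE by auto
    have aB: "a \<in> car B" "b \<in> car B" "c \<in> car B" using aE EB by auto
    have aA: "a \<in> car A" "b \<in> car A" "c \<in> car A" using aB BA by auto
    {
      fix x y
      assume h1: "\<not> (a = b \<and> b = c) \<and> leq A c (cmp A a b)" and h2: "atom A x \<and> atom A y \<and> leq A x a \<and> leq A y b"
      have xA: "x \<in> car A" "y \<in> car A" using h2 acA acB acE by auto
      obtain dx where dx: "atom B dx" "leq A x dx" "leq A dx a" using K1 h2 aB by blast
      obtain dy where dy: "atom B dy" "leq A y dy" "leq A dy b" using K1 h2 aB by blast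
      have dxA: "dx \<in> car A" "dy \<in> car A" using dx dy acA acB acE BA by auto
      have xd: "leq A x (dvs A)" "leq A y (dvs A)" using Ai.trans xA aA dA h h2 by blast+
      have dd: "leq A dx (dvs A)" "leq A dy (dvs A)" using Ai.trans dxA aA dA h dx dy by blast+
      have sp: "cmp A x y = (if x \<noteq> cnv A y then mt A (cmp A dx dy) (dvs A) else cmp A dx dy)"
        using splitf h2 xd dx dy by blast
      show "leq A c (cmp A x y)"
      proof (cases "dx = dy")
        case False
        hence "cmp A dx dy = dvs A" using e23 dx dy dd by blast
        hence "cmp A x y = dvs A" using sp Ai.midem dA by simp
        thus ?thesis using h by simp
      next
        case True
        hence cdd: "cmp A dx dy = neg A dx" using e23 dx dy dd by blast
        have "\<not> leq A dx c"
        proof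
          assume "leq A dx c"
          hence "a = c" "b = c" using K2 dx dy True h by blast+
          thus False using h1 by simp
        qed
        hence nc: "leq A c (neg A dx)" using K3 dx h by blast
        have "leq A c (mt A (neg A dx) (dvs A))" using Ai.glb nc h aA dA dxA by simp
        thus ?thesis using sp cdd nc by simp
      qed
    }
    {
      fix x y
      assume h1: "leq A a (cmp A a a)" and h2: "atom A x \<and> atom A y \<and> leq A x a \<and> leq A y a"
      have xA: "x \<in> car A" "y \<in> car A" using h2 acA acB acE by auto
      obtain dx where dx: "atom B dx" "leq A x dx" "leq A dx a" using K1 h2 aB by blast
      obtain dy where dy: "atom B dy" "leq A y dy" "leq A dy a" using K1 h2 aB by blast
      have dxA: "dx \<in> car A" "dy \<in> car A" using dx dy acA acB acE BA by auto
      have xd: "leq A x (dvs A)" "leq A y (dvs A)" using Ai.trans xA aA dA h h2 by blast+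
      have dd: "leq A dx (dvs A)" "leq A dy (dvs A)" using Ai.trans dxA aA dA h dx dy by blast+
      have sp: "cmp A x y = (if x \<noteq> cnv A y then mt A (cmp A dx dy) (dvs A) else cmp A dx dy)"
        using splitf h2 xd dx dy by blast
      have anz: "a \<noteq> zero A" using atom_nz h zEA by metis
      have mad: "mt A (dvs A) a = a" using Ai.LE1 Ai.mcom aA dA h by metis
      show "mt A (cmp A x y) a \<noteq> zero A"
      proof (cases "dx = dy")
        case False
        hence "cmp A dx dy = dvs A" using e23 dx dy dd by blast
        hence "cmp A x y = dvs A" using sp Ai.midem dA by simp
        thus ?thesis using mad anz by simp
      next
        case True
        hence cdd: "cmp A dx dy = neg A dx" using e23 dx dy dd by blast
        have ndA: "neg A dx \<in> car A" using dxA by simp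
        have eq: "mt A (cmp A x y) a = mt A (neg A dx) a"
          using sp cdd Ai.mass[OF ndA dA aA(1)] mad by simp
        show ?thesis
        proof
          assume "mt A (cmp A x y) a = zero A"
          hence "mt A (neg A dx) a = zero A" using eq by simp
          hence "leq A a (neg A (neg A dx))" using Ai.disj ndA aA by blast
          hence "leq A a dx" using Ai.L2 dxA by simp
          hence adx: "a = dx" using Ai.antisym dx aA dxA by blast
          have "cmp A a a = neg A a" using e23 dx dd adx by blast
          hence "leq A a (neg A a)" using h1 by simp
          hence "leq A a (mt A a (neg A a))" using Ai.glb aA Ai.LE2 Ai.midem by simp
          hence "a = zero A" using Ai.mneg Ai.lezero aA by simp
          thus False using anz by simp
        qed
      qed
    }
  qed
qed
end
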